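(* Let $S,T,V$ be ordered trees, let $w\in T$, and let $f\colon T^w\to S$ and $g\colon V\to T$ be rigid surjections. Let $i$ be the injection of $f$ and let $v\in S$. Then \[ f^v\circ g^{i(v)} = (f\circ g^w)^v. \]
   Context: A tree is a finite, non-empty partially ordered set $(T,\sqsubseteq_T)$ with a smallest element (the root) such that the set of predecessors of each element is linearly ordered; each node counts as its own predecessor and successor. $v\wedge_T w$ is the $\sqsubseteq_T$-largest common predecessor. A tree is ordered if the immediate successors of each node carry a fixed linear order; this induces the lexicographic linear order $\leq_T$: $v\leq_T w$ if $v\sqsubseteq_T w$, and for incomparable $v,w$, $v\leq_T w$ iff the immediate successor of $v\wedge_T w$ below $v$ precedes the one below $w$. A morphism $e\colon S\to T$ satisfies $e(v\wedge_S w)=e(v)\wedge_T e(w)$, is monotone from $\leq_S$ to $\leq_T$, and maps root to root. A function $f\colon T\to S$ is a rigid surjection if there is a morphism $e\colon S\to T$ with $f\circ e={\rm id}_S$ and $e(f(w))\sqsubseteq_T w$ for all $w$; this $e$ is unique and called the injection of $f$. For $v\in T$, $T^v=\{u\in T\mid u\leq_T v\}$, an ordered tree with inherited orders. For a rigid surjection $f\colon T\to S$ with injection $i$ and $v\in S$, $f^v=f\upharpoonright T^{i(v)}$; its image is $S^v$. *)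

theory Defs
  imports "HOL-Library.FuncSet"
begin

text \<open>An ordered tree: a carrier, the tree order (sqsubseteq), and a relation
  giving the linear order on the immediate successors of each node.\<close>
record 'a otree =
  carrier :: "'a set"
  tle :: "'a \<Rightarrow> 'a \<Rightarrow> bool"
  sle :: "'a \<Rightarrow> 'a \<Rightarrow> bool"

definition is_tree :: "'a otree \<Rightarrow> bool" where
  "is_tree T \<longleftrightarrow> finite (carrier T) \<and> carrier T \<noteq> {} \<and>
     (\<forall>x\<in>carrier T. tle T x x) \<and>
     (\<forall>x\<in>carrier T. \<forall>y\<in>carrier T. tle T x y \<and> tle T y x \<longrightarrow> x = y) \<and>
     (\<forall>x\<in>carrier T. \<forall>y\<in>carrier T. \<forall>z\<in>carrier T. tle T x y \<and> tle T y z \<longrightarrow> tle T x z) \<and>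
     (\<exists>r\<in>carrier T. \<forall>x\<in>carrier T. tle T r x) \<and>
     (\<forall>x\<in>carrier T. \<forall>y\<in>carrier T. \<forall>z\<in>carrier T.
        tle T y x \<and> tle T z x \<longrightarrow> tle T y z \<or> tle T z y)"

definition isucc :: "'a otree \<Rightarrow> 'a \<Rightarrow> 'a \<Rightarrow> bool" where
  "isucc T u x \<longleftrightarrow> u \<in> carrier T \<and> x \<in> carrier T \<and> tle T u x \<and> u \<noteq> x \<and>
     (\<forall>z\<in>carrier T. tle T u z \<and> tle T z x \<longrightarrow> z = u \<or> z = x)"

definition ordered_tree :: "'a otree \<Rightarrow> bool" where
  "ordered_tree T \<longleftrightarrow> is_tree T \<and>
     (\<forall>u\<in>carrier T.
        (\<forall>x. isucc T u x \<longrightarrow> sle T x x) \<and>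
        (\<forall>x y. isucc T u x \<and> isucc T u y \<and> sle T x y \<and> sle T y x \<longrightarrow> x = y) \<and>
        (\<forall>x y z. isucc T u x \<and> isucc T u y \<and> isucc T u z \<and> sle T x y \<and> sle T y z
                   \<longrightarrow> sle T x z) \<and>
        (\<forall>x y. isucc T u x \<and> isucc T u y \<longrightarrow> sle T x y \<or> sle T y x))"

definition root :: "'a otree \<Rightarrow> 'a" where
  "root T = (THE r. r \<in> carrier T \<and> (\<forall>x\<in>carrier T. tle T r x))"

definition meet :: "'a otree \<Rightarrow> 'a \<Rightarrow> 'a \<Rightarrow> 'a" where
  "meet T v w = (THE z. z \<in> carrier T \<and> tle T z v \<and> tle T z w \<and>
      (\<forall>z'\<in>carrier T. tle T z' v \<and> tle T z' w \<longrightarrow> tle T z' z))"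

definition lex :: "'a otree \<Rightarrow> 'a \<Rightarrow> 'a \<Rightarrow> bool" where
  "lex T v w \<longleftrightarrow> tle T v w \<or>
     (\<not> tle T v w \<and> \<not> tle T w v \<and>
      (\<exists>a b. isucc T (meet T v w) a \<and> isucc T (meet T v w) b \<and>
             tle T a v \<and> tle T b w \<and> sle T a b))"

definition morphism :: "'a otree \<Rightarrow> 'b otree \<Rightarrow> ('a \<Rightarrow> 'b) \<Rightarrow> bool" where
  "morphism S T e \<longleftrightarrow> e \<in> carrier S \<rightarrow> carrier T \<and>
     (\<forall>v\<in>carrier S. \<forall>w\<in>carrier S. e (meet S v w) = meet T (e v) (e w)) \<and>
     (\<forall>v\<in>carrier S. \<forall>w\<in>carrier S. lex S v w \<longrightarrow> lex T (e v) (e w)) \<and>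
     e (root S) = root T"

definition is_injection_of :: "'a otree \<Rightarrow> 'b otree \<Rightarrow> ('a \<Rightarrow> 'b) \<Rightarrow> ('b \<Rightarrow> 'a) \<Rightarrow> bool" where
  "is_injection_of T S f e \<longleftrightarrow> morphism S T e \<and> (\<forall>s\<in>carrier S. f (e s) = s) \<and>
     (\<forall>w\<in>carrier T. tle T (e (f w)) w)"

definition rigid_surj :: "'a otree \<Rightarrow> 'b otree \<Rightarrow> ('a \<Rightarrow> 'b) \<Rightarrow> bool" where
  "rigid_surj T S f \<longleftrightarrow> f \<in> carrier T \<rightarrow> carrier S \<and> (\<exists>e. is_injection_of T S f e)"

text \<open>The injection (unique on the carrier of S).\<close>
definition injection :: "'a otree \<Rightarrow> 'b otree \<Rightarrow> ('a \<Rightarrow> 'b) \<Rightarrow> 'b \<Rightarrow> 'a" where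
  "injection T S f = (SOME e. is_injection_of T S f e)"

definition subtree :: "'a otree \<Rightarrow> 'a \<Rightarrow> 'a otree" where
  "subtree T v = \<lparr>carrier = {u \<in> carrier T. lex T u v}, tle = tle T, sle = sle T\<rparr>"

text \<open>A map is represented as a pair (domain tree, function), the function
  being extensional (undefined outside the domain).\<close>
type_synonym ('a, 'b) tmap = "'a otree \<times> ('a \<Rightarrow> 'b)"

definition tmap :: "'a otree \<Rightarrow> ('a \<Rightarrow> 'b) \<Rightarrow> ('a, 'b) tmap" where
  "tmap T f = (T, restrict f (carrier T))"

definition tcomp :: "('b, 'c) tmap \<Rightarrow> ('a, 'b) tmap \<Rightarrow> ('a, 'c) tmap" where
  "tcomp F G = tmap (fst G) (snd F \<circ> snd G)"

text \<open>f^v = f restricted to T^{i(v)}, for a rigid surjection F = (T,f) onto S.\<close>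
definition tres :: "('a, 'b) tmap \<Rightarrow> 'b otree \<Rightarrow> 'b \<Rightarrow> ('a, 'b) tmap" where
  "tres F S v = tmap (subtree (fst F) (injection (fst F) S (snd F) v)) (snd F)"

end

theory Submission imports Defs begin

lemma finite_chain_max:
  assumes "finite P" "P \<noteq> {}" "\<And>x y. x\<in>P \<Longrightarrow> y\<in>P \<Longrightarrow> R x y \<or> R y x"
    "\<And>x y z. x\<in>P \<Longrightarrow> y\<in>P \<Longrightarrow> z\<in>P \<Longrightarrow> R x y \<Longrightarrow> R y z \<Longrightarrow> R x z"
  shows "\<exists>m\<in>P. \<forall>x\<in>P. R x m"
  using assms
proof (induction P rule: finite_ne_induct)
  case (singleton x) then show ?case by blast
next
  case (insert x F)
  have "\<exists>m\<in>F. \<forall>y\<in>F. R y m" 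
    apply (rule insert.IH) using insert.prems by blast+
  then obtain m where m: "m \<in> F" "\<forall>y\<in>F. R y m" by blast
  have tot: "R x m \<or> R m x" using insert.prems(1)[of x m] m(1) by blast
  have xx: "R x x" using insert.prems(1)[of x x] by blast
  have tr: "\<And>y. y \<in> F \<Longrightarrow> R y m \<Longrightarrow> R m x \<Longrightarrow> R y x"
    using insert.prems(2) m(1) by blast
  show ?case
  proof (cases "R x m")
    case True then show ?thesis using m by auto
  next
    case False
    then have "R m x" using tot by simp
    then show ?thesis using m xx tr by auto
  qed
qed
definition br :: "'a otree \<Rightarrow> 'a \<Rightarrow> 'a \<Rightarrow> bool" where
  "br T v w \<longleftrightarrow> (\<exists>m a b. isucc T m a \<and> isucc T m b \<and> a \<noteq> b \<and> tle T a v \<and> tle T b w \<and> sle T a b)"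

context fixes T :: "'a otree" assumes ot: "ordered_tree T" begin

lemma T_fin: "finite (carrier T)" using ot unfolding ordered_tree_def is_tree_def by blast
lemma T_refl: "x \<in> carrier T \<Longrightarrow> tle T x x" using ot unfolding ordered_tree_def is_tree_def by blast
lemma T_antisym: "x \<in> carrier T \<Longrightarrow> y \<in> carrier T \<Longrightarrow> tle T x y \<Longrightarrow> tle T y x \<Longrightarrow> x = y"
  using ot unfolding ordered_tree_def is_tree_def by blast
lemma T_trans: "x \<in> carrier T \<Longrightarrow> y \<in> carrier T \<Longrightarrow> z \<in> carrier T \<Longrightarrow> tle T x y \<Longrightarrow> tle T y z \<Longrightarrow> tle T x z"
  using ot unfolding ordered_tree_def is_tree_def by blast
lemma T_lin: "x \<in> carrier T \<Longrightarrow> y \<in> carrier T \<Longrightarrow> z \<in> carrier T \<Longrightarrow> tle T y x \<Longrightarrow> tle T z x \<Longrightarrow> tle T y z \<or> tle T z y"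
  using ot unfolding ordered_tree_def is_tree_def by blast
lemma T_rootex: "\<exists>r\<in>carrier T. \<forall>x\<in>carrier T. tle T r x"
  using ot unfolding ordered_tree_def is_tree_def by blast
lemma T_root: "root T \<in> carrier T \<and> (\<forall>x\<in>carrier T. tle T (root T) x)"
proof -
  obtain r where r: "r\<in>carrier T" "\<forall>x\<in>carrier T. tle T r x" using T_rootex by blast
  have "root T = r" unfolding root_def
    by (rule the_equality) (use r T_antisym in auto)
  then show ?thesis using r by simp
qed
lemma isucc_C: "isucc T u x \<Longrightarrow> u \<in> carrier T \<and> x \<in> carrier T \<and> tle T u x \<and> u \<noteq> x"
  unfolding isucc_def by blast
lemma OT_u: "u \<in> carrier T \<Longrightarrow> (\<forall>x. isucc T u x \<longrightarrow> sle T x x) \<and>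
        (\<forall>x y. isucc T u x \<and> isucc T u y \<and> sle T x y \<and> sle T y x \<longrightarrow> x = y) \<and>
        (\<forall>x y z. isucc T u x \<and> isucc T u y \<and> isucc T u z \<and> sle T x y \<and> sle T y z
                   \<longrightarrow> sle T x z) \<and>
        (\<forall>x y. isucc T u x \<and> isucc T u y \<longrightarrow> sle T x y \<or> sle T y x)"
  using ot unfolding ordered_tree_def by blast
lemma S_antisym: "isucc T u x \<Longrightarrow> isucc T u y \<Longrightarrow> sle T x y \<Longrightarrow> sle T y x \<Longrightarrow> x = y"
  using OT_u isucc_C by blast
lemma S_trans: "isucc T u x \<Longrightarrow> isucc T u y \<Longrightarrow> isucc T u z \<Longrightarrow> sle T x y \<Longrightarrow> sle T y z \<Longrightarrow> sle T x z"
  using OT_u isucc_C by blast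
lemma S_total: "isucc T u x \<Longrightarrow> isucc T u y \<Longrightarrow> sle T x y \<or> sle T y x"
  using OT_u isucc_C by blast

lemma meet_eq:
  assumes "m \<in> carrier T" "tle T m v" "tle T m w"
    "\<forall>z\<in>carrier T. tle T z v \<and> tle T z w \<longrightarrow> tle T z m"
  shows "meet T v w = m"
  unfolding meet_def
proof (rule the_equality)
  fix z assume "z \<in> carrier T \<and> tle T z v \<and> tle T z w \<and> (\<forall>z'\<in>carrier T. tle T z' v \<and> tle T z' w \<longrightarrow> tle T z' z)"
  then show "z = m" using assms T_antisym by blast
qed (use assms in blast)

lemma meet_prop:
  assumes "v \<in> carrier T" "w \<in> carrier T"
  shows "meet T v w \<in> carrier T \<and> tle T (meet T v w) v \<and> tle T (meet T v w) w \<and>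
    (\<forall>z\<in>carrier T. tle T z v \<and> tle T z w \<longrightarrow> tle T z (meet T v w))"
proof -
  let ?P = "{z\<in>carrier T. tle T z v \<and> tle T z w}"
  have "\<exists>m\<in>?P. \<forall>x\<in>?P. tle T x m"
    apply (rule finite_chain_max[where R="tle T"])
    subgoal using T_fin by simp
    subgoal using assms T_root by blast
    using T_lin[OF assms(1)] apply blast
    subgoal for x y z using T_trans[of x y z] by blast
    done
  then obtain m where "m \<in> ?P" "\<forall>x\<in>?P. tle T x m" by blast
  moreover then have "meet T v w = m" by (intro meet_eq) auto
  ultimately show ?thesis by auto
qed

lemma meet_comm: "v \<in> carrier T \<Longrightarrow> w \<in> carrier T \<Longrightarrow> meet T w v = meet T v w"
  using meet_prop[of v w] by (intro meet_eq) auto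

lemma isucc_ex:
  assumes "m \<in> carrier T" "v \<in> carrier T" "tle T m v" "m \<noteq> v"
  shows "\<exists>a. isucc T m a \<and> tle T a v"
proof -
  let ?P = "{y\<in>carrier T. tle T m y \<and> tle T y v \<and> y \<noteq> m}"
  have "\<exists>a\<in>?P. \<forall>x\<in>?P. (\<lambda>x y. tle T y x) x a"
    apply (rule finite_chain_max[where R="\<lambda>x y. tle T y x"])
    subgoal using T_fin by simp
    subgoal using assms T_refl[of v] by blast
    using T_lin[OF assms(2)] apply blast
    subgoal for x y z using T_trans[of z y x] by blast
    done
  then obtain a where a: "a \<in> ?P" "\<forall>x\<in>?P. tle T a x" by blast
  have aP: "a \<in> carrier T" "tle T m a" "tle T a v" "a \<noteq> m" using a(1) by auto
  have "\<forall>z\<in>carrier T. tle T m z \<and> tle T z a \<longrightarrow> z = m \<or> z = a"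
  proof (intro ballI impI)
    fix z assume z: "z \<in> carrier T" "tle T m z \<and> tle T z a"
    show "z = m \<or> z = a"
    proof (cases "z = m")
      case False
      have "tle T z v" using T_trans[of z a v] z aP assms(2) by blast
      then have "z \<in> ?P" using z False by blast
      then have "tle T a z" using a(2) by blast
      then show ?thesis using T_antisym[of z a] z aP by blast
    qed simp
  qed
  then have "isucc T m a" unfolding isucc_def using aP assms(1) by blast
  then show ?thesis using a by auto
qed

lemma isucc_uniq:
  assumes "isucc T m a" "isucc T m b" "tle T a x" "tle T b x" "x \<in> carrier T"
  shows "a = b"
proof -
  have c: "a \<in> carrier T" "b \<in> carrier T" "m \<in> carrier T" using assms unfolding isucc_def by auto
  have "tle T a b \<or> tle T b a" using T_lin[OF assms(5) c(1,2)] assms by auto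
  have ua: "\<forall>z\<in>carrier T. tle T m z \<and> tle T z a \<longrightarrow> z = m \<or> z = a"
   and ub: "\<forall>z\<in>carrier T. tle T m z \<and> tle T z b \<longrightarrow> z = m \<or> z = b"
    using assms(1,2) unfolding isucc_def by blast+
  have "a \<noteq> m" "b \<noteq> m" "tle T m a" "tle T m b" using assms(1,2) isucc_C by blast+
  then show ?thesis using ua ub c \<open>tle T a b \<or> tle T b a\<close> by blast
qed


lemma branch:
  assumes "isucc T m a" "isucc T m b" "a \<noteq> b" "tle T a v" "tle T b w" "v \<in> carrier T" "w \<in> carrier T"
  shows "\<not> tle T v w \<and> \<not> tle T w v \<and> meet T v w = m"
proof -
  have c: "m \<in> carrier T" "a \<in> carrier T" "b \<in> carrier T" "tle T m a" "tle T m b" "m \<noteq> a"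
    using assms(1,2) isucc_C by blast+
  have naw: "\<not> tle T a w"
    using isucc_uniq[of m a b w] assms by blast
  have nvw: "\<not> tle T v w"
    using T_trans[of a v w] naw assms c by blast
  have nwv: "\<not> tle T w v"
    using T_trans[of b w v] isucc_uniq[of m a b v] assms c by blast
  have "meet T v w = m"
  proof (rule meet_eq)
    show "m \<in> carrier T" by (rule c)
    show "tle T m v" using T_trans[of m a v] c assms by blast
    show "tle T m w" using T_trans[of m b w] c assms by blast
    show "\<forall>z\<in>carrier T. tle T z v \<and> tle T z w \<longrightarrow> tle T z m"
    proof (intro ballI impI)
      fix z assume z: "z \<in> carrier T" "tle T z v \<and> tle T z w"
      have "tle T z a \<or> tle T a z" using T_lin[of v z a] z c assms by blast
      moreover have "\<not> tle T a z" using T_trans[of a z w] z c assms naw by blast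
      ultimately have za: "tle T z a" by blast
      have "tle T z m \<or> tle T m z" using T_lin[of a z m] z c za by blast
      moreover have "tle T m z \<Longrightarrow> z = m \<or> z = a"
        using assms(1) z za unfolding isucc_def by blast
      ultimately show "tle T z m" using T_refl[of m] c naw z by blast
    qed
  qed
  then show ?thesis using nvw nwv by blast
qed

lemma lex_br:
  assumes "v \<in> carrier T" "w \<in> carrier T"
  shows "lex T v w \<longleftrightarrow> tle T v w \<or> br T v w"
proof
  assume L: "lex T v w"
  show "tle T v w \<or> br T v w"
  proof (cases "tle T v w")
    case False
    then obtain a b where ab: "isucc T (meet T v w) a" "isucc T (meet T v w) b"
      "tle T a v" "tle T b w" "sle T a b" using L unfolding lex_def by blast
    have "a \<noteq> b"
    proof
      assume "a = b"
      then have "tle T a (meet T v w)" using meet_prop[OF assms] ab isucc_C by blast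
      then show False using ab(1) isucc_C T_antisym[of a "meet T v w"] by blast
    qed
    then show ?thesis using ab unfolding br_def by blast
  qed simp
next
  assume "tle T v w \<or> br T v w"
  then show "lex T v w"
  proof
    assume "br T v w"
    then obtain m a b where ab: "isucc T m a" "isucc T m b" "a \<noteq> b" "tle T a v" "tle T b w" "sle T a b"
      unfolding br_def by blast
    have "\<not> tle T v w \<and> \<not> tle T w v \<and> meet T v w = m" using branch[OF ab(1-5) assms] .
    then show ?thesis unfolding lex_def using ab by blast
  qed (simp add: lex_def)
qed

lemma le_lex: "tle T v w \<Longrightarrow> lex T v w" by (simp add: lex_def)

lemma br_trans1:
  assumes "x \<in> carrier T" "y \<in> carrier T" "z \<in> carrier T" "tle T x y" "br T y z"
  shows "tle T x z \<or> br T x z"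
proof -
  obtain m a b where ab: "isucc T m a" "isucc T m b" "a \<noteq> b" "tle T a y" "tle T b z" "sle T a b"
    using assms(5) unfolding br_def by blast
  have c: "m \<in> carrier T" "a \<in> carrier T" "b \<in> carrier T" "tle T m a" "tle T m b"
    using ab(1,2) isucc_C by blast+
  have mz: "tle T m z" using T_trans[of m b z] c ab assms by blast
  have "tle T x a \<or> tle T a x" using T_lin[of y x a] assms c ab by blast
  then show ?thesis
  proof
    assume "tle T a x" then show ?thesis using ab unfolding br_def by blast
  next
    assume xa: "tle T x a"
    have "tle T x m \<or> tle T m x" using T_lin[of a x m] assms c xa by blast
    moreover have "tle T m x \<Longrightarrow> x = m \<or> x = a" using ab(1) xa assms unfolding isucc_def by blast
    moreover have "tle T x m \<Longrightarrow> tle T x z" using T_trans[of x m z] mz c assms by blast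
    ultimately show ?thesis using mz ab T_refl[of a] c unfolding br_def by blast
  qed
qed

lemma br_trans2:
  assumes "x \<in> carrier T" "y \<in> carrier T" "z \<in> carrier T" "br T x y" "tle T y z"
  shows "br T x z"
proof -
  obtain m a b where ab: "isucc T m a" "isucc T m b" "a \<noteq> b" "tle T a x" "tle T b y" "sle T a b"
    using assms(4) unfolding br_def by blast
  have "b \<in> carrier T" using ab(2) isucc_C by blast
  then have "tle T b z" using T_trans[of b y z] ab assms by blast
  then show ?thesis using ab unfolding br_def by blast
qed

lemma br_trans3:
  assumes "x \<in> carrier T" "y \<in> carrier T" "z \<in> carrier T" "br T x y" "br T y z"
  shows "br T x z"
proof -
  obtain m1 a1 b1 where ab1: "isucc T m1 a1" "isucc T m1 b1" "a1 \<noteq> b1" "tle T a1 x" "tle T b1 y" "sle T a1 b1"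
    using assms(4) unfolding br_def by blast
  obtain m2 a2 b2 where ab2: "isucc T m2 a2" "isucc T m2 b2" "a2 \<noteq> b2" "tle T a2 y" "tle T b2 z" "sle T a2 b2"
    using assms(5) unfolding br_def by blast
  have c1: "m1 \<in> carrier T" "a1 \<in> carrier T" "b1 \<in> carrier T" "tle T m1 a1" "tle T m1 b1" "m1 \<noteq> b1" "m1 \<noteq> a1"
    using ab1(1,2) isucc_C by blast+
  have c2: "m2 \<in> carrier T" "a2 \<in> carrier T" "b2 \<in> carrier T" "tle T m2 a2" "tle T m2 b2" "m2 \<noteq> a2" "m2 \<noteq> b2"
    using ab2(1,2) isucc_C by blast+
  have m1y: "tle T m1 y" using T_trans[of m1 b1 y] c1 ab1 assms by blast
  have m2y: "tle T m2 y" using T_trans[of m2 a2 y] c2 ab2 assms by blast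
  have "m1 = m2 \<or> (tle T m1 m2 \<and> m1 \<noteq> m2) \<or> (tle T m2 m1 \<and> m1 \<noteq> m2)"
    using T_lin[of y m1 m2] assms c1 c2 m1y m2y by blast
  then show ?thesis
  proof (elim disjE conjE)
    assume e: "m1 = m2"
    have ba: "b1 = a2" using isucc_uniq[of m1 b1 a2 y] ab1 ab2 e assms by blast
    have s: "sle T a1 b2" using S_trans[of m1 a1 b1 b2] ab1 ab2 e ba by blast
    have "a1 \<noteq> b2"
    proof
      assume "a1 = b2"
      then have "sle T b1 a1" using ab2 ba by simp
      then show False using S_antisym[of m1 a1 b1] ab1 by blast
    qed
    then show ?thesis using ab1 ab2 e s unfolding br_def by blast
  next
    assume le: "tle T m1 m2" and ne: "m1 \<noteq> m2"
    have "tle T b1 m2 \<or> tle T m2 b1" using T_lin[of y b1 m2] assms c1 c2 ab1 m2y by blast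
    moreover have "tle T m2 b1 \<Longrightarrow> m2 = m1 \<or> m2 = b1" using ab1(2) le c2 unfolding isucc_def by blast
    ultimately have "tle T b1 m2" using ne T_refl[of b1] c1 by blast
    then have "tle T b1 z" using T_trans[of b1 m2 b2] T_trans[of b1 b2 z] c1 c2 ab2 assms by blast
    then show ?thesis using ab1 unfolding br_def by blast
  next
    assume le: "tle T m2 m1" and ne: "m1 \<noteq> m2"
    have "tle T a2 m1 \<or> tle T m1 a2" using T_lin[of y a2 m1] assms c1 c2 ab2 m1y by blast
    moreover have "tle T m1 a2 \<Longrightarrow> m1 = m2 \<or> m1 = a2" using ab2(1) le c1 unfolding isucc_def by blast
    ultimately have "tle T a2 m1" using ne T_refl[of a2] c2 by blast
    then have "tle T a2 x" using T_trans[of a2 m1 a1] T_trans[of a2 a1 x] c1 c2 ab1 assms by blast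
    then show ?thesis using ab2 unfolding br_def by blast
  qed
qed

lemma lex_trans:
  assumes "x \<in> carrier T" "y \<in> carrier T" "z \<in> carrier T" "lex T x y" "lex T y z"
  shows "lex T x z"
proof -
  have 1: "tle T x y \<or> br T x y" using lex_br assms by blast
  have 2: "tle T y z \<or> br T y z" using lex_br assms by blast
  have "tle T x z \<or> br T x z"
    using 1 2 T_trans[of x y z] br_trans1[of x y z] br_trans2[of x y z] br_trans3[of x y z] assms by blast
  then show ?thesis using lex_br assms by blast
qed

lemma lex_antisym:
  assumes "v \<in> carrier T" "w \<in> carrier T" "lex T v w" "lex T w v"
  shows "v = w"
proof -
  have 1: "tle T v w \<or> br T v w" using lex_br assms by blast
  have 2: "tle T w v \<or> br T w v" using lex_br assms by blast
  have n1: "br T v w \<Longrightarrow> \<not> tle T v w \<and> \<not> tle T w v \<and> (\<exists>m a b. isucc T m a \<and> isucc T m b \<and> a \<noteq> b \<and> tle T a v \<and> tle T b w \<and> sle T a b \<and> meet T v w = m)"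
    unfolding br_def using branch assms by blast
  have n2: "br T w v \<Longrightarrow> \<not> tle T v w \<and> \<not> tle T w v \<and> (\<exists>m a b. isucc T m a \<and> isucc T m b \<and> a \<noteq> b \<and> tle T a w \<and> tle T b v \<and> sle T a b \<and> meet T w v = m)"
    unfolding br_def using branch assms by blast
  show ?thesis
  proof (cases "tle T v w \<and> tle T w v")
    case True then show ?thesis using T_antisym assms by blast
  next
    case False
    then have b: "br T v w" "br T w v" using 1 2 n1 n2 by blast+
    obtain m1 a1 b1 where ab1: "isucc T m1 a1" "isucc T m1 b1" "a1 \<noteq> b1" "tle T a1 v" "tle T b1 w" "sle T a1 b1" "meet T v w = m1"
      using n1 b by blast
    obtain m2 a2 b2 where ab2: "isucc T m2 a2" "isucc T m2 b2" "a2 \<noteq> b2" "tle T a2 w" "tle T b2 v" "sle T a2 b2" "meet T w v = m2"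
      using n2 b by blast
    have m: "m1 = m2" using meet_comm[OF assms(1,2)] ab1 ab2 by simp
    have "a1 = b2" using isucc_uniq[of m1 a1 b2 v] ab1 ab2 m assms by blast
    moreover have "b1 = a2" using isucc_uniq[of m1 b1 a2 w] ab1 ab2 m assms by blast
    ultimately have "a1 = b1" using S_antisym[of m1 a1 b1] ab1 ab2 by blast
    then show ?thesis using ab1 by blast
  qed
qed

lemma lex_total:
  assumes "v \<in> carrier T" "w \<in> carrier T"
  shows "lex T v w \<or> lex T w v"
proof (cases "tle T v w \<or> tle T w v")
  case True then show ?thesis using le_lex by blast
next
  case False
  let ?m = "meet T v w"
  have mp: "?m \<in> carrier T" "tle T ?m v" "tle T ?m w" "\<forall>z\<in>carrier T. tle T z v \<and> tle T z w \<longrightarrow> tle T z ?m"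
    using meet_prop[OF assms] by blast+
  have "?m \<noteq> v" "?m \<noteq> w" using mp False by auto
  then obtain a b where ab: "isucc T ?m a" "tle T a v" "isucc T ?m b" "tle T b w"
    using isucc_ex[of ?m v] isucc_ex[of ?m w] mp assms by blast
  have "a \<noteq> b"
  proof
    assume "a = b"
    then have "tle T a ?m" using mp ab isucc_C by blast
    then show False using ab(1) isucc_C T_antisym[of a ?m] by blast
  qed
  moreover have "sle T a b \<or> sle T b a" using S_total ab by blast
  ultimately have "br T v w \<or> br T w v" using ab unfolding br_def by blast
  then show ?thesis using lex_br assms by blast
qed

end

lemma sub_simps[simp]:
  "carrier (subtree X z) = {u\<in>carrier X. lex X u z}" "tle (subtree X z) = tle X" "sle (subtree X z) = sle X"
  by (simp_all add: subtree_def)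

context fixes X :: "'a otree" and z :: 'a assumes ot: "ordered_tree X" and zC: "z \<in> carrier X" begin

lemma sub_down: "y \<in> carrier X \<Longrightarrow> x \<in> carrier (subtree X z) \<Longrightarrow> tle X y x \<Longrightarrow> y \<in> carrier (subtree X z)"
  using lex_trans[OF ot, of y x z] le_lex[OF ot, of y x] zC by simp

lemma sub_isucc:
  assumes "x \<in> carrier (subtree X z)" "tle X q x"
  shows "isucc (subtree X z) p q \<longleftrightarrow> isucc X p q"
proof
  assume a: "isucc (subtree X z) p q"
  then have "p \<in> carrier X" "q \<in> carrier X" "tle X p q" "p \<noteq> q"
    "\<forall>z'\<in>carrier (subtree X z). tle X p z' \<and> tle X z' q \<longrightarrow> z' = p \<or> z' = q"
    unfolding isucc_def by auto
  moreover have "q \<in> carrier (subtree X z)" using a unfolding isucc_def by simp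
  ultimately show "isucc X p q" unfolding isucc_def
    using sub_down[of _ q] by blast
next
  assume a: "isucc X p q"
  then have pq: "p \<in> carrier X" "q \<in> carrier X" "tle X p q" using isucc_C[OF ot] by blast+
  have q: "q \<in> carrier (subtree X z)" using sub_down[OF pq(2) assms(1,2)] .
  have p: "p \<in> carrier (subtree X z)" using sub_down[OF pq(1) q pq(3)] .
  show "isucc (subtree X z) p q" using a p q unfolding isucc_def by auto
qed

lemma sub_meet:
  assumes "x \<in> carrier (subtree X z)" "y \<in> carrier (subtree X z)"
  shows "meet (subtree X z) x y = meet X x y"
proof -
  have xy: "x \<in> carrier X" "y \<in> carrier X" using assms by auto
  note mp = meet_prop[OF ot xy]
  have MD: "meet X x y \<in> carrier (subtree X z)" using sub_down[of "meet X x y" x] mp assms by blast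
  show ?thesis unfolding meet_def[of "subtree X z"]
  proof (rule the_equality)
    show "meet X x y \<in> carrier (subtree X z) \<and> tle (subtree X z) (meet X x y) x \<and> tle (subtree X z) (meet X x y) y \<and>
      (\<forall>z'\<in>carrier (subtree X z). tle (subtree X z) z' x \<and> tle (subtree X z) z' y \<longrightarrow> tle (subtree X z) z' (meet X x y))"
      using MD mp by auto
  next
    fix m assume m: "m \<in> carrier (subtree X z) \<and> tle (subtree X z) m x \<and> tle (subtree X z) m y \<and>
      (\<forall>z'\<in>carrier (subtree X z). tle (subtree X z) z' x \<and> tle (subtree X z) z' y \<longrightarrow> tle (subtree X z) z' m)"
    then have "tle X (meet X x y) m" using MD mp by auto
    moreover have "tle X m (meet X x y)" using m mp by auto
    moreover have "m \<in> carrier X" using m by auto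
    ultimately show "m = meet X x y" using T_antisym[OF ot] mp by blast
  qed
qed

lemma sub_lex:
  assumes "x \<in> carrier (subtree X z)" "y \<in> carrier (subtree X z)"
  shows "lex (subtree X z) x y \<longleftrightarrow> lex X x y"
proof -
  have i1: "\<And>a p. tle X a x \<Longrightarrow> isucc (subtree X z) p a \<longleftrightarrow> isucc X p a"
    using sub_isucc[OF assms(1)] by blast
  have i2: "\<And>a p. tle X a y \<Longrightarrow> isucc (subtree X z) p a \<longleftrightarrow> isucc X p a"
    using sub_isucc[OF assms(2)] by blast
  show ?thesis unfolding lex_def[of "subtree X z"] lex_def[of X] sub_meet[OF assms] sub_simps
    using i1 i2 by blast
qed

lemma sub_root: "root (subtree X z) = root X"
proof -
  note r = T_root[OF ot]
  have rD: "root X \<in> carrier (subtree X z)" using r zC le_lex[OF ot] by auto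
  show ?thesis unfolding root_def[of "subtree X z"]
  proof (rule the_equality)
    show "root X \<in> carrier (subtree X z) \<and> (\<forall>x\<in>carrier (subtree X z). tle (subtree X z) (root X) x)"
      using rD r by auto
  next
    fix m assume m: "m \<in> carrier (subtree X z) \<and> (\<forall>x\<in>carrier (subtree X z). tle (subtree X z) m x)"
    then have "tle X m (root X)" "tle X (root X) m" "m \<in> carrier X" using rD r by auto
    then show "m = root X" using T_antisym[OF ot] r by blast
  qed
qed

end

lemma inj_restrict: "is_injection_of T S (restrict f (carrier T)) = is_injection_of T S f"
proof (rule ext)
  fix e
  show "is_injection_of T S (restrict f (carrier T)) e = is_injection_of T S f e"
  proof
    assume a: "is_injection_of T S (restrict f (carrier T)) e"
    then have "e \<in> carrier S \<rightarrow> carrier T" unfolding is_injection_of_def morphism_def by blast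
    then show "is_injection_of T S f e" using a unfolding is_injection_of_def by (auto simp: Pi_iff)
  next
    assume a: "is_injection_of T S f e"
    then have "e \<in> carrier S \<rightarrow> carrier T" unfolding is_injection_of_def morphism_def by blast
    then show "is_injection_of T S (restrict f (carrier T)) e" using a unfolding is_injection_of_def by (auto simp: Pi_iff)
  qed
qed

lemma injection_restrict: "injection T S (restrict f (carrier T)) = injection T S f"
  unfolding injection_def inj_restrict ..

lemma mor_le:
  assumes "ordered_tree S" "ordered_tree T" "morphism S T e" "a \<in> carrier S" "b \<in> carrier S" "tle S a b"
  shows "tle T (e a) (e b)"
proof -
  have "meet S a b = a" using meet_eq[OF assms(1), of a a b] assms T_refl[OF assms(1)] by blast
  then have "e a = meet T (e a) (e b)" using assms(3-5) unfolding morphism_def by metis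
  moreover have "e a \<in> carrier T" "e b \<in> carrier T" using assms(3-5) unfolding morphism_def by auto
  ultimately show ?thesis using meet_prop[OF assms(2), of "e a" "e b"] by metis
qed

lemma rig:
  assumes oV: "ordered_tree V" and oT: "ordered_tree T" and jI: "is_injection_of V T g j"
    and gT: "g \<in> carrier V \<rightarrow> carrier T" and t: "t \<in> carrier T" and x: "x \<in> carrier V"
    and L: "lex V x (j t)"
  shows "lex T (g x) t"
proof (rule ccontr)
  assume n: "\<not> lex T (g x) t"
  have gx: "g x \<in> carrier T" using gT x by blast
  have jm: "morphism T V j" "\<forall>s\<in>carrier T. g (j s) = s" "\<forall>w\<in>carrier V. tle V (j (g w)) w"
    using jI unfolding is_injection_of_def by blast+
  have jC: "j \<in> carrier T \<rightarrow> carrier V" using jm(1) unfolding morphism_def by blast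
  have "lex T t (g x)" using lex_total[OF oT t gx] n by blast
  then have "lex V (j t) (j (g x))" using jm(1) t gx unfolding morphism_def by blast
  moreover have "lex V (j (g x)) x" using le_lex[OF oV] jm(3) x by blast
  ultimately have "lex V (j t) x" using lex_trans[OF oV, of "j t" "j (g x)" x] jC t gx x by blast
  then have "x = j t" using lex_antisym[OF oV] L x jC t by blast
  then have "g x = t" using jm(2) t by simp
  then show False using n le_lex[OF oT] T_refl[OF oT] t by blast
qed


theorem lemma4p4:
  fixes S :: "'c otree" and T :: "'b otree" and V :: "'a otree"
    and f :: "'b \<Rightarrow> 'c" and g :: "'a \<Rightarrow> 'b" and w :: 'b and v :: 'c
  assumes "ordered_tree S" and "ordered_tree T" and "ordered_tree V"
    and "w \<in> carrier T"
    and "rigid_surj (subtree T w) S f"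
    and "rigid_surj V T g"
    and "v \<in> carrier S"
  shows "tcomp (tres (tmap (subtree T w) f) S v)
               (tres (tmap V g) T (injection (subtree T w) S f v))
       = tres (tcomp (tmap (subtree T w) f) (tres (tmap V g) T w)) S v"
proof -
  note oS = assms(1) and oT = assms(2) and oV = assms(3) and wC = assms(4) and vC = assms(7)
  define Tw where "Tw = subtree T w"
  define i where "i = injection Tw S f"
  define j where "j = injection V T g"
  have fS: "f \<in> carrier Tw \<rightarrow> carrier S" "\<exists>e. is_injection_of Tw S f e"
    using assms(5) unfolding rigid_surj_def Tw_def by blast+
  have gT: "g \<in> carrier V \<rightarrow> carrier T" "\<exists>e. is_injection_of V T g e"
    using assms(6) unfolding rigid_surj_def by blast+
  have iI: "is_injection_of Tw S f i" unfolding i_def injection_def by (rule someI_ex[OF fS(2)])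
  have jI: "is_injection_of V T g j" unfolding j_def injection_def by (rule someI_ex[OF gT(2)])
  have CTw: "carrier Tw = {x\<in>carrier T. lex T x w}" unfolding Tw_def by simp
  have im: "morphism S Tw i" "\<forall>s\<in>carrier S. f (i s) = s" "\<forall>x\<in>carrier Tw. tle T (i (f x)) x"
    using iI unfolding is_injection_of_def Tw_def by auto
  have iC: "\<And>s. s \<in> carrier S \<Longrightarrow> i s \<in> carrier T \<and> lex T (i s) w"
    using im(1) CTw unfolding morphism_def by blast
  have jm: "morphism T V j" "\<forall>s\<in>carrier T. g (j s) = s" "\<forall>x\<in>carrier V. tle V (j (g x)) x"
    using jI unfolding is_injection_of_def by auto
  have jC: "\<And>s. s \<in> carrier T \<Longrightarrow> j s \<in> carrier V"
    using jm(1) unfolding morphism_def by blast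
  have jlex: "\<And>a b. a \<in> carrier T \<Longrightarrow> b \<in> carrier T \<Longrightarrow> lex T a b \<Longrightarrow> lex V (j a) (j b)"
    using jm(1) unfolding morphism_def by blast
  define u where "u = i v"
  have u: "u \<in> carrier T" "lex T u w" using iC[OF vC] u_def by auto
  have uTw: "u \<in> carrier Tw" using u CTw by simp
  define Vw where "Vw = subtree V (j w)"
  have jwC: "j w \<in> carrier V" using jC wC .
  have juC: "j u \<in> carrier V" using jC u(1) .
  have CVw: "carrier Vw = {x\<in>carrier V. lex V x (j w)}" unfolding Vw_def by simp
  have juw: "lex V (j u) (j w)" using jlex u wC by blast
  have juVw: "j u \<in> carrier Vw" using CVw juC juw by simp
  have rg: "\<And>t x. t \<in> carrier T \<Longrightarrow> x \<in> carrier V \<Longrightarrow> lex V x (j t) \<Longrightarrow> lex T (g x) t"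
    using rig[OF oV oT jI gT(1)] by blast
  have gw: "\<And>x. x \<in> carrier Vw \<Longrightarrow> g x \<in> carrier Tw"
    using rg[OF wC] CVw CTw gT(1) by auto
  define h where "h = restrict (restrict f (carrier Tw) \<circ> restrict (restrict g (carrier V)) (carrier Vw)) (carrier Vw)"
  have hx: "\<And>x. x \<in> carrier Vw \<Longrightarrow> h x = f (g x)"
    unfolding h_def using gw CVw by auto
  have e0: "is_injection_of Vw S h (j \<circ> i)"
  proof -
    have jiC: "\<And>s. s \<in> carrier S \<Longrightarrow> j (i s) \<in> carrier Vw"
      using iC jC jlex wC CVw by simp
    have mor: "morphism S Vw (j \<circ> i)"
      unfolding morphism_def
    proof (intro conjI ballI impI)
      show "j \<circ> i \<in> carrier S \<rightarrow> carrier Vw" using jiC by auto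
    next
      fix a b assume ab: "a \<in> carrier S" "b \<in> carrier S"
      have "i (meet S a b) = meet Tw (i a) (i b)" using im(1) ab unfolding morphism_def by blast
      also have "\<dots> = meet T (i a) (i b)" unfolding Tw_def
        by (rule sub_meet[OF oT wC]) (use iC ab in auto)
      finally have "j (i (meet S a b)) = meet V (j (i a)) (j (i b))"
        using jm(1) iC ab unfolding morphism_def by metis
      also have "\<dots> = meet Vw (j (i a)) (j (i b))" unfolding Vw_def
        by (rule sub_meet[OF oV jwC, symmetric]) (use jiC ab CVw Vw_def in auto)
      finally show "(j \<circ> i) (meet S a b) = meet Vw ((j \<circ> i) a) ((j \<circ> i) b)" by simp
    next
      fix a b assume ab: "a \<in> carrier S" "b \<in> carrier S" and l: "lex S a b"
      have "lex Tw (i a) (i b)" using im(1) ab l unfolding morphism_def by blast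
      then have "lex T (i a) (i b)" unfolding Tw_def using sub_lex[OF oT wC] iC ab by auto
      then have "lex V (j (i a)) (j (i b))" using jlex iC ab by blast
      then show "lex Vw ((j \<circ> i) a) ((j \<circ> i) b)" unfolding Vw_def
        using sub_lex[OF oV jwC] jiC ab CVw Vw_def by auto
    next
      have "i (root S) = root Tw" using im(1) unfolding morphism_def by blast
      also have "\<dots> = root T" unfolding Tw_def by (rule sub_root[OF oT wC])
      finally have "j (i (root S)) = root V" using jm(1) unfolding morphism_def by simp
      also have "\<dots> = root Vw" unfolding Vw_def by (rule sub_root[OF oV jwC, symmetric])
      finally show "(j \<circ> i) (root S) = root Vw" by simp
    qed
    have inv: "\<forall>s\<in>carrier S. h ((j \<circ> i) s) = s"
    proof
      fix s assume s: "s \<in> carrier S"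
      have "h (j (i s)) = f (g (j (i s)))" using hx jiC s by blast
      also have "\<dots> = s" using jm(2) im(2) iC s by simp
      finally show "h ((j \<circ> i) s) = s" by simp
    qed
    have below: "\<forall>x\<in>carrier Vw. tle Vw ((j \<circ> i) (h x)) x"
    proof
      fix x assume x: "x \<in> carrier Vw"
      have xV: "x \<in> carrier V" using x CVw by simp
      have gxw: "g x \<in> carrier Tw" using gw x .
      have gxT: "g x \<in> carrier T" using gxw CTw by simp
      have fgx: "f (g x) \<in> carrier S" using fS(1) gxw by blast
      have "tle T (i (f (g x))) (g x)" using im(3) gxw by blast
      then have "tle V (j (i (f (g x)))) (j (g x))"
        using mor_le[OF oT oV jm(1)] iC fgx gxT by blast
      moreover have "tle V (j (g x)) x" using jm(3) xV by blast
      ultimately have "tle V (j (i (f (g x)))) x"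
        using T_trans[OF oV] jC iC fgx gxT xV by blast
      then show "tle Vw ((j \<circ> i) (h x)) x" using hx x Vw_def by simp
    qed
    show ?thesis unfolding is_injection_of_def using mor inv below by blast
  qed
  have kI: "is_injection_of Vw S h (injection Vw S h)"
    unfolding injection_def by (rule someI[of _ "j \<circ> i"], rule e0)
  have k: "injection Vw S h v = j u"
  proof -
    let ?k = "injection Vw S h"
    have kC: "?k v \<in> carrier Vw" "h (?k v) = v" "\<forall>x\<in>carrier Vw. tle Vw (?k (h x)) x"
      using kI vC unfolding is_injection_of_def morphism_def by auto
    have eC: "j (i v) \<in> carrier Vw" "h (j (i v)) = v" "\<forall>x\<in>carrier Vw. tle Vw (j (i (h x))) x"
      using e0 vC unfolding is_injection_of_def morphism_def by auto
    have "tle V (?k v) (j (i v))" using kC(3) eC(1,2) Vw_def by (metis sub_simps(2))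
    moreover have "tle V (j (i v)) (?k v)" using eC(3) kC(1,2) Vw_def by (metis sub_simps(2))
    ultimately show ?thesis using T_antisym[OF oV] kC(1) eC(1) CVw u_def by blast
  qed
  have st: "subtree Vw (j u) = subtree V (j u)"
  proof -
    have "carrier (subtree Vw (j u)) = carrier (subtree V (j u))"
    proof -
      have "\<And>x. x \<in> carrier Vw \<Longrightarrow> lex Vw x (j u) \<longleftrightarrow> lex V x (j u)"
        unfolding Vw_def using sub_lex[OF oV jwC] juVw Vw_def by blast
      moreover have "\<And>x. x \<in> carrier V \<Longrightarrow> lex V x (j u) \<Longrightarrow> x \<in> carrier Vw"
        using lex_trans[OF oV] juC jwC juw CVw by blast
      ultimately show ?thesis using CVw by auto
    qed
    then show ?thesis unfolding subtree_def Vw_def by simp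
  qed
  have L1: "tres (tmap (subtree T w) f) S v = tmap (subtree Tw u) (restrict f (carrier Tw))"
    unfolding tres_def tmap_def fst_conv snd_conv injection_restrict Tw_def i_def u_def by simp
  have L2: "tres (tmap V g) T (injection (subtree T w) S f v) = tmap (subtree V (j u)) (restrict g (carrier V))"
    unfolding tres_def tmap_def fst_conv snd_conv injection_restrict Tw_def i_def u_def j_def by simp
  have R1: "tcomp (tmap (subtree T w) f) (tres (tmap V g) T w) = (Vw, h)"
    unfolding tcomp_def tres_def tmap_def fst_conv snd_conv injection_restrict h_def Vw_def Tw_def j_def by simp
  have R2: "tres (Vw, h) S v = tmap (subtree V (j u)) h"
    unfolding tres_def using k st by simp
  have gu: "\<And>x. x \<in> carrier (subtree V (j u)) \<Longrightarrow> g x \<in> carrier (subtree Tw u)"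
  proof -
    fix x assume x: "x \<in> carrier (subtree V (j u))"
    have xV: "x \<in> carrier V" "lex V x (j u)" using x by auto
    have l: "lex T (g x) u" using rg[OF u(1) xV] .
    have gxT: "g x \<in> carrier T" using gT(1) xV by blast
    have "lex T (g x) w" using lex_trans[OF oT gxT u(1) wC l u(2)] .
    then have gTw: "g x \<in> carrier Tw" using CTw gxT by simp
    then have "lex Tw (g x) u" using sub_lex[OF oT wC] uTw l Tw_def by blast
    then show "g x \<in> carrier (subtree Tw u)" using gTw by simp
  qed
  have xVw: "\<And>x. x \<in> carrier (subtree V (j u)) \<Longrightarrow> x \<in> carrier Vw"
    using st by (metis (no_types, lifting) mem_Collect_eq sub_simps(1))
  show ?thesis unfolding L1 L2 R1 R2
    unfolding tcomp_def tmap_def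
    using gu xVw hx CTw by (auto intro!: ext simp: restrict_def)
qed

end
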